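(* (i) For $n\ge 3$, $\chi_{dom}(T_n)=n+1$. (ii) For $n\ge 2$, $\chi_{dom}(O_n)=\chi_{dom}(Q_n)=n+1$.
   Context: A dominated coloring of a graph is a proper coloring in which every color class is dominated by at least one vertex, i.e. for each color class $C$ there is a vertex adjacent to every vertex of $C$; $\chi_{dom}$ denotes the minimum number of colors in a dominated coloring. A cactus is a connected graph in which every block is an edge or a cycle. A chain triangular cactus of length $n$, $T_n$, is a cactus whose $n$ blocks are all triangles, each triangle has at most two cut-vertices, and each cut-vertex is shared by exactly two triangles (all such graphs of length $n$ are isomorphic). A square cactus chain of length $n$ is defined in the same way with every block a $4$-cycle; an internal square is an ortho-square if its two cut-vertices are adjacent and a para-square if they are not adjacent. $Q_n$ is the para-chain of length $n$ (all internal squares are para-squares) and $O_n$ is the ortho-chain of length $n$ (all internal squares are ortho-squares). *)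

theory Defs
  imports Main
begin

definition adj :: "(nat \<times> nat) set \<Rightarrow> nat \<Rightarrow> nat \<Rightarrow> bool" where
  "adj E u v \<longleftrightarrow> (u, v) \<in> E \<or> (v, u) \<in> E"

definition dominated_coloring ::
  "nat set \<Rightarrow> (nat \<times> nat) set \<Rightarrow> (nat \<Rightarrow> nat) \<Rightarrow> nat \<Rightarrow> bool" where
  "dominated_coloring V E c k \<longleftrightarrow>
     (\<forall>v\<in>V. c v < k) \<and>
     (\<forall>u\<in>V. \<forall>v\<in>V. adj E u v \<longrightarrow> c u \<noteq> c v) \<and>
     (\<forall>i<k. {v\<in>V. c v = i} \<noteq> {} \<longrightarrow> (\<exists>w\<in>V. \<forall>v\<in>V. c v = i \<longrightarrow> adj E w v))"

definition chi_dom :: "nat set \<Rightarrow> (nat \<times> nat) set \<Rightarrow> nat" where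
  "chi_dom V E = (LEAST k. \<exists>c. dominated_coloring V E c k)"

text \<open>Chain triangular cactus T_n: triangles {2i, 2i+1, 2i+2}, i < n;
  cut vertices 2, 4, ..., 2(n-1).\<close>

definition T_V :: "nat \<Rightarrow> nat set" where "T_V n = {..2*n}"
definition T_E :: "nat \<Rightarrow> (nat \<times> nat) set" where
  "T_E n = (\<Union>i<n. {(2*i, 2*i+1), (2*i+1, 2*i+2), (2*i, 2*i+2)})"

text \<open>Square chains: squares on {3i, 3i+1, 3i+2, 3i+3}, i < n; cut vertices 3, 6, ..., 3(n-1).
  Para-chain Q_n: 4-cycle 3i - 3i+1 - 3i+3 - 3i+2 - 3i (cut vertices 3i, 3i+3 non-adjacent).
  Ortho-chain O_n: 4-cycle 3i - 3i+3 - 3i+1 - 3i+2 - 3i (cut vertices 3i, 3i+3 adjacent).\<close>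

definition S_V :: "nat \<Rightarrow> nat set" where "S_V n = {..3*n}"
definition Q_E :: "nat \<Rightarrow> (nat \<times> nat) set" where
  "Q_E n = (\<Union>i<n. {(3*i, 3*i+1), (3*i+1, 3*i+3), (3*i+3, 3*i+2), (3*i+2, 3*i)})"
definition O_E :: "nat \<Rightarrow> (nat \<times> nat) set" where
  "O_E n = (\<Union>i<n. {(3*i, 3*i+3), (3*i+3, 3*i+1), (3*i+1, 3*i+2), (3*i+2, 3*i)})"

end

theory Submission
  imports Defs
begin

lemma memT: assumes "b \<le> 2*n" "b = a+1 \<or> (b = a+2 \<and> a mod 2 = 0)" shows "(a,b) \<in> T_E n"
proof -
  define i where "i = a div 2"
  have ai: "a = 2*i \<or> a = 2*i+1" unfolding i_def by presburger
  have "i < n" using assms ai by auto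
  moreover have "(a,b) \<in> {(2*i, 2*i+1), (2*i+1, 2*i+2), (2*i, 2*i+2)}" using assms ai by auto
  ultimately show ?thesis unfolding T_E_def by blast
qed

lemma adjT: "adj (T_E n) u v \<longleftrightarrow> u \<le> 2*n \<and> v \<le> 2*n \<and>
  (u+1 = v \<or> v+1 = u \<or> (u+2 = v \<and> u mod 2 = 0) \<or> (v+2 = u \<and> v mod 2 = 0))"
proof
  assume "adj (T_E n) u v" then show "u \<le> 2*n \<and> v \<le> 2*n \<and>
  (u+1 = v \<or> v+1 = u \<or> (u+2 = v \<and> u mod 2 = 0) \<or> (v+2 = u \<and> v mod 2 = 0))"
    unfolding adj_def T_E_def by auto
next
  assume "u \<le> 2*n \<and> v \<le> 2*n \<and>
  (u+1 = v \<or> v+1 = u \<or> (u+2 = v \<and> u mod 2 = 0) \<or> (v+2 = u \<and> v mod 2 = 0))"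
  then show "adj (T_E n) u v" unfolding adj_def using memT[of v n u] memT[of u n v] by auto
qed



lemma mod3s: "(3*i) mod 3 = (0::nat)" "(3*i+1) mod 3 = (1::nat)" "(3*i+2) mod 3 = (2::nat)" "(3*i+3) mod 3 = (0::nat)"
  "Suc (3*i) mod 3 = 1" "Suc (Suc (3*i)) mod 3 = 2" "Suc (Suc (Suc (3*i))) mod 3 = 0"
  by presburger+

definition RQ :: "nat \<Rightarrow> nat \<Rightarrow> bool" where
  "RQ a b \<longleftrightarrow> (a mod 3 = 0 \<and> (b = a+1 \<or> b = a+2)) \<or> (a mod 3 = 1 \<and> b = a+2) \<or> (a mod 3 = 2 \<and> b = a+1)"
definition RO :: "nat \<Rightarrow> nat \<Rightarrow> bool" where
  "RO a b \<longleftrightarrow> (a mod 3 = 0 \<and> (b = a+3 \<or> b = a+2)) \<or> (a mod 3 = 1 \<and> (b = a+2 \<or> b = a+1))"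

lemma memQ: assumes "b \<le> 3*n" "RQ a b"
  shows "(a,b) \<in> Q_E n \<or> (b,a) \<in> Q_E n"
proof -
  define i where "i = a div 3"
  have ai: "a = 3*i \<or> a = 3*i+1 \<or> a = 3*i+2" unfolding i_def by presburger
  have "i < n" using assms ai unfolding RQ_def by auto
  moreover have "(a,b) \<in> {(3*i, 3*i+1), (3*i+1, 3*i+3), (3*i+3, 3*i+2), (3*i+2, 3*i)} \<or>
     (b,a) \<in> {(3*i, 3*i+1), (3*i+1, 3*i+3), (3*i+3, 3*i+2), (3*i+2, 3*i)}" 
    using ai
  proof (elim disjE)
    assume h: "a = 3*i" then show ?thesis using assms h unfolding RQ_def by (auto simp: mod3s)
  next
    assume h: "a = 3*i+1" then show ?thesis using assms h unfolding RQ_def by (auto simp: mod3s)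
  next
    assume h: "a = 3*i+2" then show ?thesis using assms h unfolding RQ_def by (auto simp: mod3s)
  qed
  ultimately show ?thesis unfolding Q_E_def by blast
qed

lemma memQ2: assumes "(a,b) \<in> Q_E n" shows "a \<le> 3*n \<and> b \<le> 3*n \<and> (RQ a b \<or> RQ b a)"
proof -
  from assms obtain i where i: "i < n" and
    "(a,b) \<in> {(3*i, 3*i+1), (3*i+1, 3*i+3), (3*i+3, 3*i+2), (3*i+2, 3*i)}" unfolding Q_E_def by blast
  then consider "a = 3*i" "b = 3*i+1" | "a = 3*i+1" "b = 3*i+3" | "a = 3*i+3" "b = 3*i+2" | "a = 3*i+2" "b = 3*i"
    by blast
  then show ?thesis using i by cases (auto simp: RQ_def mod3s)
qed

lemma adjQ: "adj (Q_E n) u v \<longleftrightarrow> u \<le> 3*n \<and> v \<le> 3*n \<and> (RQ u v \<or> RQ v u)"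
proof
  assume "adj (Q_E n) u v" then show "u \<le> 3*n \<and> v \<le> 3*n \<and> (RQ u v \<or> RQ v u)"
    unfolding adj_def using memQ2[of u v n] memQ2[of v u n] by blast
next
  assume "u \<le> 3*n \<and> v \<le> 3*n \<and> (RQ u v \<or> RQ v u)"
  then show "adj (Q_E n) u v" unfolding adj_def using memQ[of v n u] memQ[of u n v] by blast
qed

lemma memO: assumes "b \<le> 3*n" "RO a b"
  shows "(a,b) \<in> O_E n \<or> (b,a) \<in> O_E n"
proof -
  define i where "i = a div 3"
  have ai: "a = 3*i \<or> a = 3*i+1 \<or> a = 3*i+2" unfolding i_def by presburger
  have "i < n" using assms ai unfolding RO_def by auto
  moreover have "(a,b) \<in> {(3*i, 3*i+3), (3*i+3, 3*i+1), (3*i+1, 3*i+2), (3*i+2, 3*i)} \<or>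
     (b,a) \<in> {(3*i, 3*i+3), (3*i+3, 3*i+1), (3*i+1, 3*i+2), (3*i+2, 3*i)}" 
    using ai
  proof (elim disjE)
    assume h: "a = 3*i" then show ?thesis using assms h unfolding RO_def by (auto simp: mod3s)
  next
    assume h: "a = 3*i+1" then show ?thesis using assms h unfolding RO_def by (auto simp: mod3s)
  next
    assume h: "a = 3*i+2" then show ?thesis using assms h unfolding RO_def by (auto simp: mod3s)
  qed
  ultimately show ?thesis unfolding O_E_def by blast
qed

lemma memO2: assumes "(a,b) \<in> O_E n" shows "a \<le> 3*n \<and> b \<le> 3*n \<and> (RO a b \<or> RO b a)"
proof -
  from assms obtain i where i: "i < n" and
    "(a,b) \<in> {(3*i, 3*i+3), (3*i+3, 3*i+1), (3*i+1, 3*i+2), (3*i+2, 3*i)}" unfolding O_E_def by blast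
  then consider "a = 3*i" "b = 3*i+3" | "a = 3*i+3" "b = 3*i+1" | "a = 3*i+1" "b = 3*i+2" | "a = 3*i+2" "b = 3*i"
    by blast
  then show ?thesis using i by cases (auto simp: RO_def mod3s)
qed

lemma adjO: "adj (O_E n) u v \<longleftrightarrow> u \<le> 3*n \<and> v \<le> 3*n \<and> (RO u v \<or> RO v u)"
proof
  assume "adj (O_E n) u v" then show "u \<le> 3*n \<and> v \<le> 3*n \<and> (RO u v \<or> RO v u)"
    unfolding adj_def using memO2[of u v n] memO2[of v u n] by blast
next
  assume "u \<le> 3*n \<and> v \<le> 3*n \<and> (RO u v \<or> RO v u)"
  then show "adj (O_E n) u v" unfolding adj_def using memO[of v n u] memO[of u n v] by blast
qed

lemma class_sum:
  assumes "finite S" "\<forall>v\<in>S. c v < (k::nat)"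
  shows "(\<Sum>i<k. card {v\<in>S. c v = i}) = card S"
proof -
  have "(\<Sum>i\<in>{..<k}. \<Sum>x\<in>{x\<in>S. c x = i}. (1::nat)) = (\<Sum>x\<in>S. 1)"
    by (rule sum.group) (use assms in auto)
  then show ?thesis by simp
qed

lemma side_card:
  fixes K :: "nat set"
  assumes "finite K" "w \<notin> K"
    "\<And>x y. x \<in> K \<Longrightarrow> y \<in> K \<Longrightarrow> x < w \<Longrightarrow> y < w \<Longrightarrow> x = y"
    "\<And>x y. x \<in> K \<Longrightarrow> y \<in> K \<Longrightarrow> x > w \<Longrightarrow> y > w \<Longrightarrow> x = y"
  shows "card K \<le> 2"
proof -
  have "x < w \<or> x > w" if "x \<in> K" for x using that assms(2) by (cases "x = w") auto
  then have eq: "K = {x\<in>K. x < w} \<union> {x\<in>K. x > w}" by auto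
  moreover have "card {x\<in>K. x < w} \<le> Suc 0" using assms(1,3)
    by (subst card_le_Suc0_iff_eq) auto
  moreover have "card {x\<in>K. x > w} \<le> Suc 0" using assms(1,4)
    by (subst card_le_Suc0_iff_eq) auto
  moreover have "card K = card ({x\<in>K. x < w} \<union> {x\<in>K. x > w})" using eq by (rule arg_cong)
  moreover note card_Un_le[of "{x\<in>K. x < w}" "{x\<in>K. x > w}"]
  ultimately show ?thesis by linarith
qed

lemma T1: assumes "adj (T_E n) w x" "adj (T_E n) w y" "x < w" "y < w" "x \<noteq> y" shows "adj (T_E n) x y"
proof -
  have hx: "x+1 = w \<or> (x+2 = w \<and> x mod 2 = 0)" "w \<le> 2*n" using assms(1,3) unfolding adjT by auto
  have hy: "y+1 = w \<or> (y+2 = w \<and> y mod 2 = 0)" using assms(2,4) unfolding adjT by auto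
  from hy show ?thesis
  proof
    assume yy: "y+1 = w" then have "x+2 = w" "x mod 2 = 0" using hx(1) assms(5) by presburger+
    then show ?thesis using hx(2) yy unfolding adjT by auto
  next
    assume yy: "y+2 = w \<and> y mod 2 = 0" then have "x+1 = w" using hx(1) assms(5) by presburger
    then show ?thesis using hx(2) yy unfolding adjT by auto
  qed
qed
lemma T2: assumes "adj (T_E n) w x" "adj (T_E n) w y" "x > w" "y > w" "x \<noteq> y" shows "adj (T_E n) x y"
proof -
  have hx: "x = w+1 \<or> (x = w+2 \<and> w mod 2 = 0)" "x \<le> 2*n" using assms(1,3) unfolding adjT by auto
  have hy: "y = w+1 \<or> (y = w+2 \<and> w mod 2 = 0)" "y \<le> 2*n" using assms(2,4) unfolding adjT by auto
  from hy(1) show ?thesis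
  proof
    assume yy: "y = w+1" then have "x = w+2" "w mod 2 = 0" using hx(1) assms(5) by presburger+
    then show ?thesis using hx(2) hy(2) yy unfolding adjT by auto
  next
    assume yy: "y = w+2 \<and> w mod 2 = 0" then have "x = w+1" using hx(1) assms(5) by presburger
    then show ?thesis using hx(2) hy(2) yy unfolding adjT by auto
  qed
qed

lemma card_TV: "card (T_V n) = 2*n+1" unfolding T_V_def by simp

lemma T_lower:
  assumes "dominated_coloring (T_V n) (T_E n) c k"
  shows "n + 1 \<le> k"
proof -
  let ?V = "T_V n"
  have fin: "finite ?V" unfolding T_V_def by simp
  have col: "\<forall>v\<in>?V. c v < k" and prp: "\<forall>u\<in>?V. \<forall>v\<in>?V. adj (T_E n) u v \<longrightarrow> c u \<noteq> c v"
    and dom: "\<forall>i<k. {v\<in>?V. c v = i} \<noteq> {} \<longrightarrow> (\<exists>w\<in>?V. \<forall>v\<in>?V. c v = i \<longrightarrow> adj (T_E n) w v)"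
    using assms unfolding dominated_coloring_def by auto
  have cls: "card {v\<in>?V. c v = i} \<le> 2" if ik: "i < k" for i
  proof (cases "{v\<in>?V. c v = i} = {}")
    case True then show ?thesis by (subst True) simp
  next
    case False
    then obtain w where w: "w \<in> ?V" "\<forall>v\<in>?V. c v = i \<longrightarrow> adj (T_E n) w v" using dom[rule_format, OF ik False] by blast
    show ?thesis
    proof (rule side_card)
      show "finite {v\<in>?V. c v = i}" using fin by simp
      have "\<not> adj (T_E n) w w" by (simp add: adjT)
      then show "w \<notin> {v\<in>?V. c v = i}" using w by blast
    next
      fix x y assume xy: "x \<in> {v\<in>?V. c v = i}" "y \<in> {v\<in>?V. c v = i}" "x < w" "y < w"
      show "x = y"
      proof (rule ccontr)
        assume ne: "x \<noteq> y"
        have "adj (T_E n) w x" "adj (T_E n) w y" using w xy by auto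
        then have "adj (T_E n) x y" using T1[of n w x y] xy ne by blast
        then have "c x \<noteq> c y" using prp xy by blast
        then show False using xy by simp
      qed
    next
      fix x y assume xy: "x \<in> {v\<in>?V. c v = i}" "y \<in> {v\<in>?V. c v = i}" "x > w" "y > w"
      show "x = y"
      proof (rule ccontr)
        assume ne: "x \<noteq> y"
        have "adj (T_E n) w x" "adj (T_E n) w y" using w xy by auto
        then have "adj (T_E n) x y" using T2[of n w x y] xy ne by blast
        then have "c x \<noteq> c y" using prp xy by blast
        then show False using xy by simp
      qed
    qed
  qed
  have "2*n+1 = (\<Sum>i<k. card {v\<in>?V. c v = i})" using class_sum[OF fin col] card_TV by simp
  also have "\<dots> \<le> (\<Sum>i<k. 2)" by (rule sum_mono) (use cls in auto)
  finally show ?thesis by simp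
qed


definition cT :: "nat \<Rightarrow> nat \<Rightarrow> nat" where
  "cT n v = (if v = 2*n-2 then n-2 else if v = 2*n then n else if v = 2*n-3 then n
     else if v mod 2 = 0 then v div 2 + 1 else v div 2)"


lemma cT_eq: "cT (m+3) v = (if v = 2*m+4 then m+1 else if v = 2*m+6 then m+3 else if v = 2*m+3 then m+3
     else if v mod 2 = 0 then v div 2 + 1 else v div 2)"
  unfolding cT_def by (simp add: algebra_simps)

lemma cT_dom: assumes "v \<le> 2*m+6"
  shows "adj (T_E (m+3)) (if cT (m+3) v = m+3 then 2*m+4 else 2*cT (m+3) v) v"
proof -
  have "v = 2*m+4 \<or> v = 2*m+6 \<or> v = 2*m+3 \<or> (v \<le> 2*m+2 \<and> v mod 2 = 0) \<or> (v \<le> 2*m+5 \<and> v mod 2 = 1 \<and> v \<noteq> 2*m+3)"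
    using assms by presburger
  then consider "v = 2*m+4" | "v = 2*m+6" | "v = 2*m+3" | "v \<le> 2*m+2" "v mod 2 = 0" | "v \<le> 2*m+5" "v mod 2 = 1" "v \<noteq> 2*m+3"
    by (elim disjE conjE) auto
  then show ?thesis
  proof cases
    case 1 then show ?thesis unfolding cT_eq adjT by simp
  next
    case 2 then show ?thesis unfolding cT_eq adjT by simp
  next
    case 3 then show ?thesis unfolding cT_eq adjT by simp
  next
    case 4
    then have "cT (m+3) v = v div 2 + 1" "2 * (v div 2 + 1) = v + 2" "v div 2 + 1 \<noteq> m+3"
      unfolding cT_eq by presburger+
    then show ?thesis using 4 unfolding adjT by simp
  next
    case 5
    then have "cT (m+3) v = v div 2" "2 * (v div 2) + 1 = v" "v div 2 \<noteq> m+3"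
      unfolding cT_eq by presburger+
    then show ?thesis using 5 unfolding adjT by simp
  qed
qed

lemma cT_prop: assumes "u < v" "v \<le> 2*m+6" "v = u+1 \<or> (v = u+2 \<and> u mod 2 = 0)"
  shows "cT (m+3) u \<noteq> cT (m+3) v"
proof -
  have "(u \<le> 2*m+1 \<and> v \<le> 2*m+2) \<or> (u = 2*m+2 \<and> v = 2*m+3) \<or> (u=2*m+3 \<and> v = 2*m+4) \<or> (u=2*m+2 \<and> v=2*m+4)
     \<or> (u=2*m+4 \<and> v=2*m+5) \<or> (u=2*m+5 \<and> v=2*m+6) \<or> (u=2*m+4 \<and> v=2*m+6)" using assms by presburger
  then show ?thesis using assms(3)
    by (elim disjE conjE; simp only: cT_eq; presburger)
qed

lemma T_upper: "dominated_coloring (T_V (m+3)) (T_E (m+3)) (cT (m+3)) (m+3+1)"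
  unfolding dominated_coloring_def
proof (intro conjI)
  show "\<forall>v\<in>T_V (m+3). cT (m+3) v < m+3+1"
  proof
    fix v assume "v \<in> T_V (m+3)"
    then have "v \<le> 2*m+6" unfolding T_V_def by simp
    then show "cT (m+3) v < m+3+1" unfolding cT_eq by presburger
  qed
  show "\<forall>u\<in>T_V (m+3). \<forall>v\<in>T_V (m+3). adj (T_E (m+3)) u v \<longrightarrow> cT (m+3) u \<noteq> cT (m+3) v"
  proof (intro ballI impI)
    fix u v assume "u \<in> T_V (m+3)" "v \<in> T_V (m+3)" "adj (T_E (m+3)) u v"
    then have "u \<le> 2*m+6" "v \<le> 2*m+6" "u+1 = v \<or> v+1 = u \<or> (u+2 = v \<and> u mod 2 = 0) \<or> (v+2 = u \<and> v mod 2 = 0)"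
      unfolding adjT by auto
    then show "cT (m+3) u \<noteq> cT (m+3) v" using cT_prop[of u v m] cT_prop[of v u m] by auto
  qed
  show "\<forall>i<m+3+1. {v \<in> T_V (m+3). cT (m+3) v = i} \<noteq> {} \<longrightarrow>
     (\<exists>w\<in>T_V (m+3). \<forall>v\<in>T_V (m+3). cT (m+3) v = i \<longrightarrow> adj (T_E (m+3)) w v)"
  proof (intro allI impI)
    fix i assume i: "i < m+3+1"
    let ?w = "if i = m+3 then 2*m+4 else 2*i"
    have "?w \<in> T_V (m+3)" using i unfolding T_V_def by auto
    moreover have "\<forall>v\<in>T_V (m+3). cT (m+3) v = i \<longrightarrow> adj (T_E (m+3)) ?w v"
    proof (intro ballI impI)
      fix v assume v: "v \<in> T_V (m+3)" "cT (m+3) v = i"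
      then have "adj (T_E (m+3)) (if cT (m+3) v = m+3 then 2*m+4 else 2*cT (m+3) v) v"
        using cT_dom[of v m] unfolding T_V_def by simp
      then show "adj (T_E (m+3)) ?w v" by (simp only: v(2))
    qed
    ultimately show "\<exists>w\<in>T_V (m+3). \<forall>v\<in>T_V (m+3). cT (m+3) v = i \<longrightarrow> adj (T_E (m+3)) w v" by blast
  qed
qed

lemma T_main: assumes "n \<ge> 3" shows "chi_dom (T_V n) (T_E n) = n + 1"
proof -
  obtain m where m: "n = m+3" using assms by (metis add.commute le_Suc_ex)
  show ?thesis unfolding chi_dom_def
  proof (rule Least_equality)
    show "\<exists>c. dominated_coloring (T_V n) (T_E n) c (n + 1)" using T_upper[of m] m by blast
  next
    fix k assume "\<exists>c. dominated_coloring (T_V n) (T_E n) c k"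
    then show "n + 1 \<le> k" using T_lower by blast
  qed
qed

lemma RO_lt: "RO a b \<Longrightarrow> a < b" unfolding RO_def by auto
lemma RQ_lt: "RQ a b \<Longrightarrow> a < b" unfolding RQ_def by auto

lemma O1: assumes "RO x w" "RO y w" "x mod 3 \<noteq> 0" "y mod 3 \<noteq> 0" shows "x = y"
  using assms unfolding RO_def by (auto simp: mod_Suc; presburger)
lemma O2: "RO w x \<Longrightarrow> RO w y \<Longrightarrow> x mod 3 \<noteq> 0 \<Longrightarrow> y mod 3 \<noteq> 0 \<Longrightarrow> x = y"
  unfolding RO_def by (auto simp: mod_Suc; presburger)
lemma Q1: "RQ x w \<Longrightarrow> RQ y w \<Longrightarrow> w mod 3 \<noteq> 0 \<Longrightarrow> x = y"
  unfolding RQ_def by (auto simp: mod_Suc; presburger)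
lemma Q2: "RQ w x \<Longrightarrow> RQ w y \<Longrightarrow> w mod 3 \<noteq> 0 \<Longrightarrow> x = y"
  unfolding RQ_def by (auto simp: mod_Suc; presburger)
lemma Q3: "RQ x w \<or> RQ w x \<Longrightarrow> (w mod 3 = 0 \<longleftrightarrow> x mod 3 \<noteq> 0)"
  unfolding RQ_def by (auto simp: mod_Suc; presburger)
lemma Q4: "RQ x w \<or> RQ w x \<Longrightarrow> x \<in> {w-2, w-1, w+1, w+2}"
  unfolding RQ_def by auto
lemma O3: "adj (O_E n) w 2 \<Longrightarrow> adj (O_E n) w x \<Longrightarrow> x mod 3 \<noteq> 0 \<Longrightarrow> x = 2"
  unfolding adjO RO_def by (auto simp: mod_Suc; presburger)
lemma card4: "card {a,b,c,d::nat} \<le> 4"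
  by (auto simp: card_insert_if)

definition cO :: "nat \<Rightarrow> nat" where
  "cO v = (if v mod 3 = 1 then v div 3 + 1 else if v mod 3 = 2 then v div 3 else if v = 0 then 1
           else if v = 3 then 0 else v div 3 - 1)"
definition wO :: "nat \<Rightarrow> nat \<Rightarrow> nat" where
  "wO n i = (if i = 0 then 1 else if i = n then 3*n-1 else 3*i)"

lemma cO_prop: "RO u v \<Longrightarrow> cO u \<noteq> cO v"
  unfolding RO_def cO_def by (auto simp: mod_Suc; presburger)
lemma cO_lt: "n \<ge> 1 \<Longrightarrow> v \<le> 3*n \<Longrightarrow> cO v < n + 1"
  unfolding cO_def by (auto simp: mod_Suc; presburger)

lemma cO_dom: assumes "v \<le> 3*n" "n \<ge> 2" shows "adj (O_E n) (wO n (cO v)) v"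
proof -
  obtain q r where v: "v = 3*q + r" "r < 3" by (metis div_mult_mod_eq mod_less_divisor zero_less_numeral add.commute mult.commute)
  have dm: "v div 3 = q" "v mod 3 = r" using v by presburger+
  have "r = 0 \<or> r = 1 \<or> r = 2" using v by auto
  then show ?thesis
  proof (elim disjE)
    assume r: "r = 0"
    then have "cO v = (if q = 0 then 1 else if q = 1 then 0 else q - 1)" unfolding cO_def dm using r v by auto
    then show ?thesis using assms v r unfolding adjO RO_def wO_def by (auto simp: mod_Suc; presburger)
  next
    assume r: "r = 1"
    then have "cO v = q + 1" unfolding cO_def dm using r v by auto
    then show ?thesis using assms v r unfolding adjO RO_def wO_def by (auto simp: mod_Suc; presburger)
  next
    assume r: "r = 2"
    then have "cO v = q" unfolding cO_def dm using r v by auto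
    then show ?thesis using assms v r unfolding adjO RO_def wO_def by (auto simp: mod_Suc; presburger)
  qed
qed

definition cQ :: "nat \<Rightarrow> nat \<Rightarrow> nat" where
  "cQ n v = (if v mod 3 = 0 then v div 6 else n div 2 + 1 + v div 6)"
definition wQ :: "nat \<Rightarrow> nat \<Rightarrow> nat" where
  "wQ n i = (if i \<le> n div 2 then (if 6*i+1 \<le> 3*n then 6*i+1 else 3*n-1) else 6*(i - (n div 2 + 1))+3)"


lemma Q3': "RQ u v \<Longrightarrow> (u mod 3 = 0 \<longleftrightarrow> v mod 3 \<noteq> 0)"
  unfolding RQ_def by (auto simp: mod_Suc; presburger)

lemma div6: fixes a n :: nat assumes "a \<le> 3*n" shows "a div 6 \<le> n div 2"
proof -
  have "a div 6 \<le> (3*n) div 6" using assms by (rule div_le_mono)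
  also have "(3*n) div 6 = n div 2" by presburger
  finally show ?thesis .
qed

lemma div6': fixes a n :: nat assumes "a \<le> 3*n" "a mod 3 \<noteq> 0" shows "n div 2 + 1 + a div 6 < n + 1"
proof -
  obtain q r where a: "a = 6*q + r" "r < 6" by (metis div_mult_mod_eq mod_less_divisor zero_less_numeral add.commute mult.commute)
  obtain m s where n: "n = 2*m + s" "s < 2" by (metis div_mult_mod_eq mod_less_divisor zero_less_numeral add.commute mult.commute)
  have "a div 6 = q" "n div 2 = m" using a n by presburger+
  moreover have "r \<noteq> 0" "r \<noteq> 3" using assms(2) a by presburger+
  moreover have "q < m + s"
  proof -
    have le: "6*q + r \<le> 6*m + 3*s" using assms(1) a n by simp
    have "r \<ge> 1" using \<open>r \<noteq> 0\<close> by simp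
    have "s = 0 \<or> s = 1" using n by auto
    then show ?thesis using le \<open>r \<ge> 1\<close> by auto
  qed
  ultimately show ?thesis using n by auto
qed

lemma cQ_prop: assumes "RQ u v" "u \<le> 3*n" "v \<le> 3*n" shows "cQ n u \<noteq> cQ n v"
proof -
  have "u mod 3 = 0 \<longleftrightarrow> v mod 3 \<noteq> 0" using Q3'[OF assms(1)] .
  then show ?thesis unfolding cQ_def using div6[OF assms(2)] div6[OF assms(3)] by auto
qed

lemma cQ_lt: "v \<le> 3*n \<Longrightarrow> cQ n v < n + 1"
  unfolding cQ_def using div6[of v n] div6'[of v n] by auto

lemma cQ_dom: assumes "v \<le> 3*n" "n \<ge> 1" shows "adj (Q_E n) (wQ n (cQ n v)) v"
proof -
  obtain q r where v: "v = 6*q + r" "r < 6" by (metis div_mult_mod_eq mod_less_divisor zero_less_numeral add.commute mult.commute)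
  have dm1: "v div 6 = q" using v by simp
  have dm: "v mod 3 = r mod 3" using v by (simp add: mod_add_left_eq[symmetric])
  have m: "(6*q) mod 3 = 0" "(6*q+1) mod 3 = 1" "(6*q+2) mod 3 = 2" "(6*q+3) mod 3 = 0" by presburger+
  have qn: "q \<le> n div 2" using div6[OF assms(1)] dm1 by simp
  have "r = 0 \<or> r = 3 \<or> (r = 1 \<or> r = 2 \<or> r = 4 \<or> r = 5)" using v by auto
  then show ?thesis
  proof (elim disjE[of "r = 0"] disjE[of "r = 3"])
    assume r: "r = 0"
    then have c: "cQ n v = q" unfolding cQ_def dm dm1 by auto
    then have w: "wQ n (cQ n v) = (if 6*q+1 \<le> 3*n then 6*q+1 else 3*n-1)" unfolding wQ_def c using qn by simp
    show ?thesis
    proof (cases "6*q+1 \<le> 3*n")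
      case True then show ?thesis unfolding w adjQ RQ_def using v r m by simp
    next
      case False
      then have vv: "v = 3*n" using v r assms by linarith
      obtain k where k: "n = Suc k" using assms(2) by (metis Suc_le_D One_nat_def)
      have "3*n-1 = 3*k+2" using k by simp
      then have "(3*n-1) mod 3 = 2" using mod3s(3)[of k] by simp
      then show ?thesis unfolding w adjQ RQ_def using False vv by simp
    qed
  next
    assume r: "r = 3"
    then have c: "cQ n v = q" unfolding cQ_def dm dm1 by auto
    have "6*q+1 \<le> 3*n" using assms v r by linarith
    then have w: "wQ n (cQ n v) = 6*q+1" unfolding wQ_def c using qn by simp
    show ?thesis unfolding w adjQ RQ_def using v r m assms by simp
  next
    assume r: "r = 1 \<or> r = 2 \<or> r = 4 \<or> r = 5"
    then have c: "cQ n v = n div 2 + 1 + q" unfolding cQ_def dm dm1 by auto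
    have w: "wQ n (cQ n v) = 6*q+3" unfolding wQ_def c by simp
    have "6*q+1 \<le> 3*n" using assms v r by linarith
    then have "2*q < n" by linarith
    then have le: "6*q+3 \<le> 3*n" by linarith
    show ?thesis unfolding w adjQ RQ_def using v m le assms r by auto
  qed
qed


lemma card_SV: "card (S_V n) = 3*n+1" unfolding S_V_def by simp
lemma card_A: "card {v\<in>S_V n. v mod 3 = 0} = n+1"
proof -
  have "{v\<in>S_V n. v mod 3 = 0} = (\<lambda>i. 3*i) ` {..n}" unfolding S_V_def
  proof (rule set_eqI, rule iffI)
    fix x assume "x \<in> {v \<in> {..3 * n}. v mod 3 = 0}"
    then have "x = 3*(x div 3)" "x div 3 \<le> n" by auto
    then show "x \<in> (\<lambda>i. 3*i) ` {..n}" by (metis atMost_iff image_eqI)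
  qed auto
  moreover have "inj_on (\<lambda>i::nat. 3*i) {..n}" by (rule inj_onI) simp
  ultimately show ?thesis by (simp add: card_image)
qed
lemma card_B: "card {v\<in>S_V n. v mod 3 \<noteq> 0} = 2*n"
proof -
  have "{v\<in>S_V n. v mod 3 \<noteq> 0} = S_V n - {v\<in>S_V n. v mod 3 = 0}" by auto
  moreover have "finite (S_V n)" unfolding S_V_def by simp
  ultimately have "card {v\<in>S_V n. v mod 3 \<noteq> 0} = card (S_V n) - card {v\<in>S_V n. v mod 3 = 0}"
    by (simp add: card_Diff_subset)
  then show ?thesis using card_SV card_A by simp
qed

lemma O_lower:
  assumes "dominated_coloring (S_V n) (O_E n) c k" "n \<ge> 1"
  shows "n + 1 \<le> k"
proof -
  let ?V = "S_V n"
  let ?B = "{v\<in>S_V n. v mod 3 \<noteq> 0}"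
  have finV: "finite ?V" unfolding S_V_def by simp
  have fin: "finite ?B" using finV by simp
  have col: "\<forall>v\<in>?V. c v < k" and prp: "\<forall>u\<in>?V. \<forall>v\<in>?V. adj (O_E n) u v \<longrightarrow> c u \<noteq> c v"
    and dom: "\<forall>i<k. {v\<in>?V. c v = i} \<noteq> {} \<longrightarrow> (\<exists>w\<in>?V. \<forall>v\<in>?V. c v = i \<longrightarrow> adj (O_E n) w v)"
    using assms unfolding dominated_coloring_def by auto
  have colB: "\<forall>v\<in>?B. c v < k" using col by auto
  have getw: "\<exists>w. \<forall>v\<in>?V. c v = i \<longrightarrow> adj (O_E n) w v" if ik: "i < k" "{v\<in>?B. c v = i} \<noteq> {}" for i
  proof -
    have "{v\<in>?V. c v = i} \<noteq> {}" using ik(2) by auto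
    then show ?thesis using dom ik(1) by blast
  qed
  have cls: "card {v\<in>?B. c v = i} \<le> 2" if ik: "i < k" for i
  proof (cases "{v\<in>?B. c v = i} = {}")
    case True then show ?thesis by (subst True) simp
  next
    case False
    then obtain w where w: "\<forall>v\<in>?V. c v = i \<longrightarrow> adj (O_E n) w v" using getw[OF ik False] by blast
    show ?thesis
    proof (rule side_card)
      show "finite {v\<in>?B. c v = i}" by (rule finite_subset[OF _ finV]) auto
      have "\<not> adj (O_E n) w w" unfolding adjO using RO_lt by blast
      then show "w \<notin> {v\<in>?B. c v = i}" using w by blast
    next
      fix x y assume xy: "x \<in> {v\<in>?B. c v = i}" "y \<in> {v\<in>?B. c v = i}" "x < w" "y < w"
      then have "adj (O_E n) w x" "adj (O_E n) w y" using w by auto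
      then have "RO w x \<or> RO x w" "RO w y \<or> RO y w" unfolding adjO by blast+
      then have "RO x w" "RO y w" using xy(3,4) RO_lt[of w x] RO_lt[of w y] by auto
      then show "x = y" using O1 xy(1,2) by blast
    next
      fix x y assume xy: "x \<in> {v\<in>?B. c v = i}" "y \<in> {v\<in>?B. c v = i}" "x > w" "y > w"
      then have "adj (O_E n) w x" "adj (O_E n) w y" using w by auto
      then have "RO w x \<or> RO x w" "RO w y \<or> RO y w" unfolding adjO by blast+
      then have "RO w x" "RO w y" using xy(3,4) RO_lt[of x w] RO_lt[of y w] by auto
      then show "x = y" using O2 xy(1,2) by blast
    qed
  qed
  have twoB: "2 \<in> ?B" using assms(2) unfolding S_V_def by simp
  define i0 where "i0 = c 2"
  have i0k: "i0 < k" using colB twoB unfolding i0_def by blast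
  have cls0: "card {v\<in>?B. c v = i0} \<le> 1"
  proof -
    obtain w where w: "\<forall>v\<in>?V. c v = i0 \<longrightarrow> adj (O_E n) w v" using getw[OF i0k] twoB unfolding i0_def by blast
    have "{v\<in>?B. c v = i0} \<subseteq> {2}"
    proof
      fix x assume x: "x \<in> {v\<in>?B. c v = i0}"
      then have "adj (O_E n) w x" using w by auto
      moreover have "adj (O_E n) w 2" using w twoB unfolding i0_def by auto
      ultimately show "x \<in> {2}" using O3 x by auto
    qed
    then have "card {v\<in>?B. c v = i0} \<le> card {2::nat}" by (intro card_mono) auto
    then show ?thesis by simp
  qed
  have "2*n = (\<Sum>i<k. card {v\<in>?B. c v = i})" using class_sum[OF fin colB] card_B by simp
  also have "\<dots> = card {v\<in>?B. c v = i0} + (\<Sum>i\<in>{..<k}-{i0}. card {v\<in>?B. c v = i})"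
    using i0k by (simp add: sum.remove)
  also have "\<dots> \<le> 1 + (\<Sum>i\<in>{..<k}-{i0}. 2)"
    using cls0 cls by (intro add_mono sum_mono) auto
  also have "\<dots> = 1 + 2*(k-1)" using i0k by simp
  finally show ?thesis using i0k by linarith
qed


lemma Q_lower:
  assumes "dominated_coloring (S_V n) (Q_E n) c k"
  shows "n + 1 \<le> k"
proof -
  let ?V = "S_V n"
  let ?A = "{v\<in>S_V n. v mod 3 = 0}"
  let ?B = "{v\<in>S_V n. v mod 3 \<noteq> 0}"
  have finV: "finite ?V" unfolding S_V_def by simp
  have finA: "finite ?A" and finB: "finite ?B" using finV by simp_all
  have col: "\<forall>v\<in>?V. c v < k"
    and dom: "\<forall>i<k. {v\<in>?V. c v = i} \<noteq> {} \<longrightarrow> (\<exists>w\<in>?V. \<forall>v\<in>?V. c v = i \<longrightarrow> adj (Q_E n) w v)"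
    using assms unfolding dominated_coloring_def by auto
  have colA: "\<forall>v\<in>?A. c v < k" and colB: "\<forall>v\<in>?B. c v < k" using col by auto
  have cls: "2 * card {v\<in>?A. c v = i} + card {v\<in>?B. c v = i} \<le> 4" if ik: "i < k" for i
  proof (cases "{v\<in>?V. c v = i} = {}")
    case True
    then have e: "{v\<in>?A. c v = i} = {}" "{v\<in>?B. c v = i} = {}" by auto
    show ?thesis unfolding e by simp
  next
    case False
    then obtain w where w: "\<forall>v\<in>?V. c v = i \<longrightarrow> adj (Q_E n) w v" using dom[rule_format, OF ik False] by blast
    have nb: "RQ x w \<or> RQ w x" if "x \<in> ?V" "c x = i" for x
    proof -
      have "adj (Q_E n) w x" using w that by blast
      then show ?thesis unfolding adjQ by blast
    qed
    show ?thesis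
    proof (cases "w mod 3 = 0")
      case True
      have nA: "x mod 3 \<noteq> 0" if "x \<in> ?V" "c x = i" for x
      proof -
        have h1: "RQ x w \<or> RQ w x" using nb that by blast
        have h2: "(w mod 3 = 0) = (x mod 3 \<noteq> 0)" by (rule Q3[OF h1])
        show ?thesis using h2 True by simp
      qed
      have eA: "{v\<in>?A. c v = i} = {}"
      proof (rule equals0I)
        fix x assume "x \<in> {v\<in>?A. c v = i}"
        then have xx: "x \<in> ?V" "c x = i" "x mod 3 = 0" by auto
        show False using nA[OF xx(1,2)] xx(3) by simp
      qed
      have sub: "{v\<in>?B. c v = i} \<subseteq> {w-2, w-1, w+1, w+2}"
      proof
        fix x assume "x \<in> {v\<in>?B. c v = i}"
        then have "x \<in> ?V" "c x = i" by auto
        then show "x \<in> {w-2, w-1, w+1, w+2}" by (rule Q4[OF nb])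
      qed
      have "card {v\<in>?B. c v = i} \<le> card {w-2, w-1, w+1, w+2}"
        by (rule card_mono[OF _ sub]) simp
      then have c4: "card {v\<in>?B. c v = i} \<le> 4" using card4[of "w-2" "w-1" "w+1" "w+2"] by linarith
      show ?thesis unfolding eA using c4 by simp
    next
      case False
      have "x mod 3 = 0" if "x \<in> ?V" "c x = i" for x
      proof -
        have h1: "RQ x w \<or> RQ w x" using nb that by blast
        have h2: "(w mod 3 = 0) = (x mod 3 \<noteq> 0)" by (rule Q3[OF h1])
        show ?thesis using h2 False by simp
      qed
      then have eB: "{v\<in>?B. c v = i} = {}" by auto
      have cA: "card {v\<in>?A. c v = i} \<le> 2"
      proof (rule side_card)
        show "finite {v\<in>?A. c v = i}" by (rule finite_subset[OF _ finV]) auto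
        show "w \<notin> {v\<in>?A. c v = i}" using False by auto
      next
        fix x y assume xy: "x \<in> {v\<in>?A. c v = i}" "y \<in> {v\<in>?A. c v = i}" "x < w" "y < w"
        then have "RQ x w \<or> RQ w x" "RQ y w \<or> RQ w y" using nb by auto
        then have "RQ x w" "RQ y w" using xy(3,4) RQ_lt[of w x] RQ_lt[of w y] by auto
        then show "x = y" using Q1 False by metis
      next
        fix x y assume xy: "x \<in> {v\<in>?A. c v = i}" "y \<in> {v\<in>?A. c v = i}" "x > w" "y > w"
        then have "RQ x w \<or> RQ w x" "RQ y w \<or> RQ w y" using nb by auto
        then have "RQ w x" "RQ w y" using xy(3,4) RQ_lt[of x w] RQ_lt[of y w] by auto
        then show "x = y" using Q2 False by metis
      qed
      show ?thesis unfolding eB using cA by simp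
    qed
  qed
  have "2*(n+1) + 2*n = 2*(\<Sum>i<k. card {v\<in>?A. c v = i}) + (\<Sum>i<k. card {v\<in>?B. c v = i})"
    using class_sum[OF finA colA] class_sum[OF finB colB] card_A card_B by simp
  also have "\<dots> = (\<Sum>i<k. 2 * card {v\<in>?A. c v = i} + card {v\<in>?B. c v = i})"
    by (simp add: sum.distrib sum_distrib_left)
  also have "\<dots> \<le> (\<Sum>i<k. 4)" by (rule sum_mono) (use cls in auto)
  finally show ?thesis by simp
qed

lemma O_upper: assumes "n \<ge> 2" shows "dominated_coloring (S_V n) (O_E n) cO (n+1)"
  unfolding dominated_coloring_def
proof (intro conjI)
  show "\<forall>v\<in>S_V n. cO v < n + 1" using cO_lt assms unfolding S_V_def by auto
  show "\<forall>u\<in>S_V n. \<forall>v\<in>S_V n. adj (O_E n) u v \<longrightarrow> cO u \<noteq> cO v"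
  proof (intro ballI impI)
    fix u v assume "adj (O_E n) u v"
    then have "RO u v \<or> RO v u" unfolding adjO by blast
    then show "cO u \<noteq> cO v" using cO_prop[of u v] cO_prop[of v u] by auto
  qed
  show "\<forall>i<n + 1. {v \<in> S_V n. cO v = i} \<noteq> {} \<longrightarrow>
     (\<exists>w\<in>S_V n. \<forall>v\<in>S_V n. cO v = i \<longrightarrow> adj (O_E n) w v)"
  proof (intro allI impI)
    fix i assume i: "i < n+1" and ne: "{v \<in> S_V n. cO v = i} \<noteq> {}"
    then obtain v0 where v0: "v0 \<in> S_V n" "cO v0 = i" by auto
    have "adj (O_E n) (wO n (cO v0)) v0" using cO_dom[of v0 n] v0 assms unfolding S_V_def by simp
    then have wV: "wO n i \<in> S_V n" using v0(2) unfolding adjO S_V_def by simp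
    have "\<forall>v\<in>S_V n. cO v = i \<longrightarrow> adj (O_E n) (wO n i) v"
    proof (intro ballI impI)
      fix v assume "v \<in> S_V n" "cO v = i"
      then show "adj (O_E n) (wO n i) v" using cO_dom[of v n] assms unfolding S_V_def by simp
    qed
    then show "\<exists>w\<in>S_V n. \<forall>v\<in>S_V n. cO v = i \<longrightarrow> adj (O_E n) w v" using wV by blast
  qed
qed

lemma Q_upper: assumes "n \<ge> 1" shows "dominated_coloring (S_V n) (Q_E n) (cQ n) (n+1)"
  unfolding dominated_coloring_def
proof (intro conjI)
  show "\<forall>v\<in>S_V n. cQ n v < n + 1" using cQ_lt unfolding S_V_def by auto
  show "\<forall>u\<in>S_V n. \<forall>v\<in>S_V n. adj (Q_E n) u v \<longrightarrow> cQ n u \<noteq> cQ n v"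
  proof (intro ballI impI)
    fix u v assume "adj (Q_E n) u v"
    then have "RQ u v \<or> RQ v u" "u \<le> 3*n" "v \<le> 3*n" unfolding adjQ by blast+
    then show "cQ n u \<noteq> cQ n v" using cQ_prop[of u v n] cQ_prop[of v u n] by auto
  qed
  show "\<forall>i<n + 1. {v \<in> S_V n. cQ n v = i} \<noteq> {} \<longrightarrow>
     (\<exists>w\<in>S_V n. \<forall>v\<in>S_V n. cQ n v = i \<longrightarrow> adj (Q_E n) w v)"
  proof (intro allI impI)
    fix i assume i: "i < n+1" and ne: "{v \<in> S_V n. cQ n v = i} \<noteq> {}"
    then obtain v0 where v0: "v0 \<in> S_V n" "cQ n v0 = i" by auto
    have "adj (Q_E n) (wQ n (cQ n v0)) v0" using cQ_dom[of v0 n] v0 assms unfolding S_V_def by simp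
    then have wV: "wQ n i \<in> S_V n" using v0(2) unfolding adjQ S_V_def by simp
    have "\<forall>v\<in>S_V n. cQ n v = i \<longrightarrow> adj (Q_E n) (wQ n i) v"
    proof (intro ballI impI)
      fix v assume "v \<in> S_V n" "cQ n v = i"
      then show "adj (Q_E n) (wQ n i) v" using cQ_dom[of v n] assms unfolding S_V_def by simp
    qed
    then show "\<exists>w\<in>S_V n. \<forall>v\<in>S_V n. cQ n v = i \<longrightarrow> adj (Q_E n) w v" using wV by blast
  qed
qed

lemma O_main: assumes "n \<ge> 2" shows "chi_dom (S_V n) (O_E n) = n + 1"
  unfolding chi_dom_def
proof (rule Least_equality)
  show "\<exists>c. dominated_coloring (S_V n) (O_E n) c (n + 1)" using O_upper[OF assms] by blast
next
  fix k assume "\<exists>c. dominated_coloring (S_V n) (O_E n) c k"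
  then show "n + 1 \<le> k" using O_lower assms by fastforce
qed

lemma Q_main: assumes "n \<ge> 2" shows "chi_dom (S_V n) (Q_E n) = n + 1"
  unfolding chi_dom_def
proof (rule Least_equality)
  show "\<exists>c. dominated_coloring (S_V n) (Q_E n) c (n + 1)" using Q_upper[of n] assms by auto
next
  fix k assume "\<exists>c. dominated_coloring (S_V n) (Q_E n) c k"
  then show "n + 1 \<le> k" using Q_lower by blast
qed

theorem mainTheorem7:
  shows "(\<forall>n::nat. n \<ge> 3 \<longrightarrow> chi_dom (T_V n) (T_E n) = n + 1) \<and>
         (\<forall>n::nat. n \<ge> 2 \<longrightarrow> chi_dom (S_V n) (O_E n) = n + 1 \<and> chi_dom (S_V n) (Q_E n) = n + 1)"
  using T_main O_main Q_main by blast

end
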